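(* Let $0<\epsilon<1/2$, $0<\rho<1$, $C=1-h(\epsilon)$, $0<R<C$ fixed, and $k=\lfloor Rn\rfloor$. There exists $\delta>0$ such that for every sequence of integers $(i_n)$ with $i_n\in(n(\epsilon-\delta),n(\epsilon+\delta))$, \[ \lim_{n\to\infty}\frac{\sum_{j=0}^{k}\binom{k}{j}\big(1-(1-2\epsilon)(1-2\rho)^j\big)^{i_n}\big(1+(1-2\epsilon)(1-2\rho)^j\big)^{n-i_n}}{2^n\epsilon^{i_n}(1-\epsilon)^{n-i_n}}=1 . \]
   Context: $h(\epsilon)=-\epsilon\log_2\epsilon-(1-\epsilon)\log_2(1-\epsilon)$. *)

theory Defs
  imports "HOL-Analysis.Analysis"
begin

definition bin_entropy :: "real \<Rightarrow> real" where
  "bin_entropy e = - e * log 2 e - (1 - e) * log 2 (1 - e)"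

end

theory Submission
  imports Defs
begin

lemma ln_strict: fixes y :: real assumes "0 < y" "y \<noteq> 1" shows "ln y < y - 1"
proof -
  define s where "s = sqrt y"
  have s: "s > 0" "s * s = y" "s \<noteq> 1" using assms by (auto simp: s_def)
  have "ln y = 2 * ln s" using assms by (simp add: s_def ln_sqrt)
  also have "\<dots> \<le> 2 * (s - 1)" using ln_le_minus_one[OF s(1)] by simp
  also have "\<dots> < y - 1"
  proof -
    have "(s-1)*(s-1) > 0" using s(3) by (metis not_real_square_gt_zero eq_iff_diff_eq_0)
    thus ?thesis using s(2) by (simp add: algebra_simps)
  qed
  finally show ?thesis .
qed

lemma lim_aux: fixes c :: real assumes "c > 0"
  shows "(\<lambda>n. real n ^ m * exp (- c * real n)) \<longlonglongrightarrow> 0"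
proof -
  have f: "filterlim (\<lambda>n. c * real n) at_top sequentially"
    using assms by (intro filterlim_tendsto_pos_mult_at_top[OF tendsto_const] filterlim_real_sequentially)
  have "(\<lambda>n. (c * real n) ^ m / exp (c * real n)) \<longlonglongrightarrow> 0"
    using filterlim_compose[OF tendsto_power_div_exp_0 f] by (simp add: o_def)
  hence "(\<lambda>n. (1 / c ^ m) * ((c * real n) ^ m / exp (c * real n))) \<longlonglongrightarrow> 0"
    by (rule tendsto_mult_right_zero)
  moreover have "(1 / c ^ m) * ((c * real n) ^ m / exp (c * real n)) = real n ^ m * exp (- c * real n)" for n
    using assms by (simp add: power_mult_distrib exp_minus field_simps)
  ultimately show ?thesis by simp
qed

lemma expE:
  fixes \<epsilon> x t :: real
  assumes "0 < \<epsilon>" "\<epsilon> < 1/2" "\<bar>x\<bar> \<le> 1"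
  shows "(1 - (1 - 2*\<epsilon>) * x) powr t * (1 + (1 - 2*\<epsilon>) * x) powr (real n - t)
     / (2 ^ n * \<epsilon> powr t * (1 - \<epsilon>) powr (real n - t))
   = exp (t * ln (1 - (1 - 2*\<epsilon>) * x) + (real n - t) * ln (1 + (1 - 2*\<epsilon>) * x)
          - (real n * ln 2 + t * ln \<epsilon> + (real n - t) * ln (1 - \<epsilon>)))"
proof -
  have "\<bar>(1 - 2*\<epsilon>) * x\<bar> \<le> \<bar>1 - 2*\<epsilon>\<bar>" using assms unfolding abs_mult
    by (simp add: mult_left_le)
  hence p: "1 - (1 - 2*\<epsilon>) * x > 0" "1 + (1 - 2*\<epsilon>) * x > 0" using assms by linarith+
  have two: "(2::real) ^ n = exp (real n * ln 2)"
    by (simp add: exp_of_nat_mult)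
  have e: "\<epsilon> \<noteq> 0" "1 - \<epsilon> \<noteq> 0" using assms by auto
  show ?thesis using p e
    by (simp add: powr_def two exp_add[symmetric] exp_diff[symmetric])
qed

lemma tangent_beta:
  fixes a \<beta> x t N :: real
  assumes a: "0 < a" "a < 1" and b: "0 \<le> \<beta>" "\<beta> < 1" and x: "\<bar>x\<bar> \<le> \<beta>"
    and t: "0 \<le> t" "t \<le> N*(1-a*\<beta>)/2"
  shows "t*ln(1-a*x) + (N-t)*ln(1+a*x) \<le> t*ln(1-a*\<beta>) + (N-t)*ln(1+a*\<beta>)"
proof -
  have "a*\<beta> \<le> 1*\<beta>" using a b by (intro mult_right_mono) auto
  hence ab: "a*\<beta> < 1" "0 \<le> a*\<beta>" using a b by auto
  have "a*\<bar>x\<bar> \<le> a*\<beta>" using a x by simp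
  hence ax: "\<bar>a*x\<bar> \<le> a*\<beta>" using a by (simp add: abs_mult)
  have p: "1-a*\<beta> > 0" "1+a*\<beta> > 0" "1-a*x > 0" "1+a*x > 0" using ab ax by linarith+
  have h1: "ln(1-a*x) \<le> ln(1-a*\<beta>) + (a*\<beta> - a*x)/(1-a*\<beta>)"
  proof -
    have "ln((1-a*x)/(1-a*\<beta>)) \<le> (1-a*x)/(1-a*\<beta>) - 1" using p by (intro ln_le_minus_one) simp
    also have "\<dots> = (a*\<beta> - a*x)/(1-a*\<beta>)" using p by (simp add: field_simps)
    finally show ?thesis using p by (simp add: ln_div)
  qed
  have h2: "ln(1+a*x) \<le> ln(1+a*\<beta>) + (a*x - a*\<beta>)/(1+a*\<beta>)"
  proof -
    have "ln((1+a*x)/(1+a*\<beta>)) \<le> (1+a*x)/(1+a*\<beta>) - 1" using p by (intro ln_le_minus_one) simp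
    also have "\<dots> = (a*x - a*\<beta>)/(1+a*\<beta>)" using p by (simp add: field_simps)
    finally show ?thesis using p by (simp add: ln_div)
  qed
  have Nt: "N - t \<ge> 0"
  proof -
    have "N*(1-a*\<beta>) \<ge> 0" using t by linarith
    hence "N \<ge> 0" using p(1) by (simp add: zero_le_mult_iff)
    moreover have "N*(1-a*\<beta>) \<le> N" using \<open>N \<ge> 0\<close> ab by (simp add: mult_left_le)
    ultimately show ?thesis using t by linarith
  qed
  have "t*ln(1-a*x) \<le> t*(ln(1-a*\<beta>) + (a*\<beta> - a*x)/(1-a*\<beta>))"
    using h1 t(1) by (rule mult_left_mono)
  moreover have "(N-t)*ln(1+a*x) \<le> (N-t)*(ln(1+a*\<beta>) + (a*x - a*\<beta>)/(1+a*\<beta>))"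
    using h2 Nt by (rule mult_left_mono)
  moreover have "t*((a*\<beta> - a*x)/(1-a*\<beta>)) + (N-t)*((a*x - a*\<beta>)/(1+a*\<beta>)) \<le> 0"
  proof -
    have "t*(1+a*\<beta>) \<le> (N-t)*(1-a*\<beta>)"
    proof -
      have "(N-t)*(1-a*\<beta>) - t*(1+a*\<beta>) = N*(1-a*\<beta>) - 2*t" by (simp add: algebra_simps)
      thus ?thesis using t by linarith
    qed
    hence q: "t/(1-a*\<beta>) \<le> (N-t)/(1+a*\<beta>)" using p by (simp add: divide_simps)
    have e: "t*((a*\<beta> - a*x)/(1-a*\<beta>)) + (N-t)*((a*x - a*\<beta>)/(1+a*\<beta>))
          = (a*(\<beta> - x)) * (t/(1-a*\<beta>) - (N-t)/(1+a*\<beta>))"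
      by (simp add: algebra_simps diff_divide_distrib add_divide_distrib)
    have "a*(\<beta> - x) \<ge> 0" using a x by simp
    moreover have "t/(1-a*\<beta>) - (N-t)/(1+a*\<beta>) \<le> 0" using q by simp
    ultimately show ?thesis unfolding e by (simp add: mult_nonneg_nonpos)
  qed
  ultimately show ?thesis by (simp add: algebra_simps)
qed

lemma Ebound1:
  fixes e \<beta> x t N \<delta> c U V :: real
  assumes e: "0 < e" "e < 1/2" and b: "0 \<le> \<beta>" "\<beta> < 1" and x: "\<bar>x\<bar> \<le> \<beta>"
    and t: "0 \<le> t" "t \<le> N*(1-(1-2*e)*\<beta>)/2" and N: "0 \<le> N"
    and d: "\<bar>t - e*N\<bar> \<le> \<delta>*N" "\<delta>*\<bar>U-V\<bar> \<le> c" "0 \<le> \<delta>"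
    and U: "U = ln(1-(1-2*e)*\<beta>) - ln 2 - ln e" and V: "V = ln(1+(1-2*e)*\<beta>) - ln 2 - ln (1-e)"
    and c: "c = -(e*U+(1-e)*V)/2"
  shows "t*ln(1-(1-2*e)*x) + (N-t)*ln(1+(1-2*e)*x) - (N*ln 2 + t*ln e + (N-t)*ln(1-e)) \<le> -c*N"
proof -
  have "t*ln(1-(1-2*e)*x) + (N-t)*ln(1+(1-2*e)*x) \<le> t*ln(1-(1-2*e)*\<beta>) + (N-t)*ln(1+(1-2*e)*\<beta>)"
    using e b x t by (intro tangent_beta) auto
  moreover have "t*ln(1-(1-2*e)*\<beta>) + (N-t)*ln(1+(1-2*e)*\<beta>) - (N*ln 2 + t*ln e + (N-t)*ln(1-e))
     = N*(e*U+(1-e)*V) + (t-e*N)*(U-V)" unfolding U V by (simp add: algebra_simps)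
  moreover have "(t-e*N)*(U-V) \<le> c*N"
  proof -
    have "(t-e*N)*(U-V) \<le> \<bar>t-e*N\<bar>*\<bar>U-V\<bar>" by (metis abs_ge_self abs_mult)
    also have "\<dots> \<le> (\<delta>*N)*\<bar>U-V\<bar>" using d by (intro mult_right_mono) auto
    also have "\<dots> = (\<delta>*\<bar>U-V\<bar>)*N" by simp
    also have "\<dots> \<le> c*N" using d N by (intro mult_right_mono) auto
    finally show ?thesis .
  qed
  moreover have "N*(e*U+(1-e)*V) = -2*c*N" unfolding c by simp
  ultimately show ?thesis by linarith
qed

lemma Ebound2:
  fixes e x t N \<delta> K :: real
  assumes e: "0 < e" "e < 1/2" and x: "\<bar>x\<bar> \<le> 1"
    and t: "0 \<le> t" "t \<le> N"
    and d: "\<bar>t - e*N\<bar> \<le> \<delta>*N" "0 \<le> \<delta>"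
    and K: "K = \<bar>ln(1-e) - ln e\<bar>"
  shows "t*ln(1-(1-2*e)*x) + (N-t)*ln(1+(1-2*e)*x) - (N*ln 2 + t*ln e + (N-t)*ln(1-e))
     \<le> N*\<bar>x\<bar> + N*(-e*ln e - (1-e)*ln(1-e) - ln 2) + \<delta>*N*K"
proof -
  define a where "a = 1-2*e"
  have a: "0 < a" "a < 1" using e by (auto simp: a_def)
  have "\<bar>a*x\<bar> \<le> a" using a x by (simp add: abs_mult mult_left_le)
  hence p: "1-a*x > 0" "1+a*x > 0" using a by linarith+
  have l1: "ln(1-a*x) \<le> -(a*x)" using ln_le_minus_one[OF p(1)] by simp
  have l2: "ln(1+a*x) \<le> a*x" using ln_le_minus_one[OF p(2)] by simp
  have "t*ln(1-a*x) \<le> t*(-(a*x))" using l1 t by (intro mult_left_mono) auto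
  moreover have "(N-t)*ln(1+a*x) \<le> (N-t)*(a*x)" using l2 t by (intro mult_left_mono) auto
  moreover have "t*(-(a*x)) + (N-t)*(a*x) \<le> N*\<bar>x\<bar>"
  proof -
    have "t*(-(a*x)) + (N-t)*(a*x) = a*x*(N-2*t)" by (simp add: algebra_simps)
    also have "\<dots> \<le> \<bar>a*x\<bar>*\<bar>N-2*t\<bar>" by (metis abs_ge_self abs_mult)
    also have "\<dots> \<le> \<bar>x\<bar>*N"
    proof (rule mult_mono)
      show "\<bar>a*x\<bar> \<le> \<bar>x\<bar>" using a by (simp add: abs_mult mult_left_le_one_le)
      show "\<bar>N-2*t\<bar> \<le> N" using t by linarith
    qed auto
    finally show ?thesis by (simp add: mult.commute)
  qed
  moreover have "-(N*ln 2 + t*ln e + (N-t)*ln(1-e)) = N*(-e*ln e - (1-e)*ln(1-e) - ln 2) + (t-e*N)*(ln(1-e) - ln e)"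
    by (simp add: algebra_simps)
  moreover have "(t-e*N)*(ln(1-e) - ln e) \<le> \<delta>*N*K"
  proof -
    have "(t-e*N)*(ln(1-e) - ln e) \<le> \<bar>t-e*N\<bar>*K" unfolding K by (metis abs_ge_self abs_mult)
    also have "\<dots> \<le> (\<delta>*N)*K" using d K by (intro mult_right_mono) auto
    finally show ?thesis by simp
  qed
  ultimately show ?thesis unfolding a_def by linarith
qed

lemma D0_neg:
  fixes e \<beta> :: real
  assumes e: "0 < e" "e < 1/2" and b: "0 \<le> \<beta>" "\<beta> < 1"
  shows "e*(ln(1-(1-2*e)*\<beta>) - ln 2 - ln e) + (1-e)*(ln(1+(1-2*e)*\<beta>) - ln 2 - ln (1-e)) < 0"
proof -
  define a where "a = 1-2*e"
  have a: "0 < a" "a < 1" using e by (auto simp: a_def)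
  have "a*\<beta> \<le> 1*\<beta>" using a b by (intro mult_right_mono) auto
  have "a*\<beta> < a*1" using a b by (intro mult_strict_left_mono) auto
  define q where "q = (1-a*\<beta>)/2"
  have "0 \<le> a*\<beta>" using a b by simp
  have q: "e < q" "q < 1" using \<open>a*\<beta> < a*1\<close> \<open>0 \<le> a*\<beta>\<close> e unfolding q_def a_def by (auto simp: field_simps)
  have q1: "1-a*\<beta> = 2*q" and q2: "1+a*\<beta> = 2*(1-q)" unfolding q_def by (auto simp: field_simps)
  have U: "ln(1-a*\<beta>) - ln 2 - ln e = ln (q/e)" unfolding q1 using q e by (simp add: ln_mult ln_div)
  have V: "ln(1+a*\<beta>) - ln 2 - ln (1-e) = ln ((1-q)/(1-e))" 
  proof -
    have "ln(2*(1-q)) = ln 2 + ln(1-q)" using q by (intro ln_mult_pos) auto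
    moreover have "ln((1-q)/(1-e)) = ln(1-q) - ln(1-e)" using q e by (simp add: ln_div)
    ultimately show ?thesis unfolding q2 by linarith
  qed
  have "ln (q/e) < q/e - 1" using q e by (intro ln_strict) auto
  hence 1: "e*ln (q/e) < q - e" using e by (simp add: field_simps)
  have "ln ((1-q)/(1-e)) \<le> (1-q)/(1-e) - 1" using q e by (intro ln_le_minus_one) auto
  hence "(1-e)*ln ((1-q)/(1-e)) \<le> (1-e)*((1-q)/(1-e) - 1)" using e by (intro mult_left_mono) auto
  also have "\<dots> = e - q" using e by (simp add: field_simps)
  finally have 2: "(1-e)*ln ((1-q)/(1-e)) \<le> e - q" .
  show ?thesis unfolding U[unfolded a_def] V[unfolded a_def] using 1 2 by linarith
qed


theorem lemma2:
  fixes \<epsilon> \<rho> R :: real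
  assumes "0 < \<epsilon>" "\<epsilon> < 1/2" "0 < \<rho>" "\<rho> < 1"
    and "0 < R" "R < 1 - bin_entropy \<epsilon>"
  shows "\<exists>\<delta>>0. \<forall>i :: nat \<Rightarrow> int.
    (\<forall>\<^sub>F n in sequentially. real n * (\<epsilon> - \<delta>) < of_int (i n) \<and> of_int (i n) < real n * (\<epsilon> + \<delta>)) \<longrightarrow>
    ((\<lambda>n. (\<Sum>j=0..nat \<lfloor>R * real n\<rfloor>. real (nat \<lfloor>R * real n\<rfloor> choose j)
          * (1 - (1 - 2*\<epsilon>) * (1 - 2*\<rho>) ^ j) powr (of_int (i n))
          * (1 + (1 - 2*\<epsilon>) * (1 - 2*\<rho>) ^ j) powr (real n - of_int (i n)))
        / (2 ^ n * \<epsilon> powr (of_int (i n)) * (1 - \<epsilon>) powr (real n - of_int (i n))))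
      \<longlonglongrightarrow> 1)"
proof -
  define a where "a = 1 - 2*\<epsilon>"
  define \<beta> where "\<beta> = \<bar>1 - 2*\<rho>\<bar>"
  define U where "U = ln(1-(1-2*\<epsilon>)*\<beta>) - ln 2 - ln \<epsilon>"
  define V where "V = ln(1+(1-2*\<epsilon>)*\<beta>) - ln 2 - ln (1-\<epsilon>)"
  define c where "c = -(\<epsilon>*U+(1-\<epsilon>)*V)/2"
  define hn where "hn = -\<epsilon>*ln \<epsilon> - (1-\<epsilon>)*ln(1-\<epsilon>)"
  define g where "g = ln 2 - hn - R * ln 2"
  define K where "K = \<bar>ln(1-\<epsilon>) - ln \<epsilon>\<bar>"
  have e: "0 < \<epsilon>" "\<epsilon> < 1/2" using assms by auto
  have a: "0 < a" "a < 1" using e by (auto simp: a_def)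
  have b: "0 \<le> \<beta>" "\<beta> < 1" using assms by (auto simp: \<beta>_def)
  have c: "c > 0" using D0_neg[OF e b] unfolding c_def U_def V_def by simp
  have hn: "hn \<ge> 0"
  proof -
    have "ln \<epsilon> < 0" "ln (1-\<epsilon>) < 0" using e by auto
    hence "\<epsilon> * ln \<epsilon> \<le> 0" "(1-\<epsilon>) * ln (1-\<epsilon>) \<le> 0" using e
      by (auto intro: mult_nonneg_nonpos)
    thus ?thesis unfolding hn_def by linarith
  qed
  have l2: "ln 2 > (0::real)" by simp
  have be: "bin_entropy \<epsilon> = hn / ln 2" unfolding bin_entropy_def hn_def log_def
    by (simp add: field_simps)
  have "R * ln 2 < (1 - hn / ln 2) * ln 2" using assms(6) l2 unfolding be
    by (intro mult_strict_right_mono) auto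
  moreover have "(1 - hn / ln 2) * ln 2 = ln 2 - hn" using l2 by (simp add: left_diff_distrib)
  ultimately have "R * ln 2 < ln 2 - hn" by simp
  hence g: "g > 0" unfolding g_def by linarith
  have R1: "R < 1"
  proof -
    have "R * ln 2 < 1 * ln 2" using \<open>R * ln 2 < ln 2 - hn\<close> hn by linarith
    thus ?thesis using l2 by (simp only: mult_less_cancel_right)
  qed
  obtain m where m: "\<beta>^m < g/4" using real_arch_pow_inv[of "g/4" \<beta>] g b by auto
  define J where "J = Suc m"
  have J: "\<beta>^J \<le> g/4"
  proof -
    have "\<beta>^J = \<beta> * \<beta>^m" by (simp add: J_def)
    also have "\<dots> \<le> 1 * \<beta>^m" using b by (intro mult_right_mono) auto
    finally show ?thesis using m by simp
  qed
  define \<delta> where "\<delta> = min (min (\<epsilon>/2) (a*(1-\<beta>)/2)) (min (c/(\<bar>U-V\<bar>+1)) (g/(4*(K+1))))"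
  have K0: "K \<ge> 0" by (simp add: K_def)
  have \<delta>pos: "\<delta> > 0" using e a b c g K0 by (auto simp: \<delta>_def)
  have d1: "\<delta> \<le> \<epsilon>/2" "\<delta> \<le> a*(1-\<beta>)/2" unfolding \<delta>_def by (metis min.cobounded1 min.cobounded2 order_trans)+
  have d3: "\<delta>*\<bar>U-V\<bar> \<le> c"
  proof -
    have "\<delta> \<le> c/(\<bar>U-V\<bar>+1)" unfolding \<delta>_def by (metis min.cobounded1 min.cobounded2 order_trans)
    hence "\<delta>*(\<bar>U-V\<bar>+1) \<le> c" by (simp add: field_simps)
    thus ?thesis using \<delta>pos by (simp add: algebra_simps)
  qed
  have d4: "\<delta>*K \<le> g/4"
  proof -
    have "\<delta> \<le> g/(4*(K+1))" unfolding \<delta>_def by (metis min.cobounded1 min.cobounded2 order_trans)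
    hence "\<delta>*(4*(K+1)) \<le> g" using K0 by (simp add: field_simps)
    thus ?thesis using \<delta>pos by (simp add: algebra_simps)
  qed
  show ?thesis
  proof (intro exI[of _ \<delta>] conjI allI impI \<delta>pos)
    fix i :: "nat \<Rightarrow> int"
    assume ev: "\<forall>\<^sub>F n in sequentially. real n * (\<epsilon> - \<delta>) < of_int (i n) \<and> of_int (i n) < real n * (\<epsilon> + \<delta>)"
    define k where "k n = nat \<lfloor>R * real n\<rfloor>" for n
    define E where "E n j = of_int (i n) * ln(1-(1-2*\<epsilon>)*(1-2*\<rho>)^j) + (real n - of_int (i n)) * ln(1+(1-2*\<epsilon>)*(1-2*\<rho>)^j) - (real n * ln 2 + of_int (i n) * ln \<epsilon> + (real n - of_int (i n)) * ln(1-\<epsilon>))" for n j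
    define S where "S n = (\<Sum>j\<in>{1..k n}. real (k n choose j) * exp (E n j))" for n
    define B where "B n = real n ^ Suc J * exp (-c * real n) + real n ^ 0 * exp (-(g/2) * real n)" for n
    define r where "r = (\<lambda>n. (\<Sum>j=0..nat \<lfloor>R * real n\<rfloor>. real (nat \<lfloor>R * real n\<rfloor> choose j)
          * (1 - (1 - 2*\<epsilon>) * (1 - 2*\<rho>) ^ j) powr (of_int (i n))
          * (1 + (1 - 2*\<epsilon>) * (1 - 2*\<rho>) ^ j) powr (real n - of_int (i n)))
        / (2 ^ n * \<epsilon> powr (of_int (i n)) * (1 - \<epsilon>) powr (real n - of_int (i n))))"
    have key: "\<forall>\<^sub>F n in sequentially. r n = 1 + S n \<and> 0 \<le> S n \<and> S n \<le> B n"
    proof (rule eventually_mono[OF eventually_conj[OF ev eventually_gt_at_top[of 0]]])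
      fix n :: nat
      assume "(real n * (\<epsilon> - \<delta>) < of_int (i n) \<and> of_int (i n) < real n * (\<epsilon> + \<delta>)) \<and> 0 < n"
      hence lo: "real n * (\<epsilon> - \<delta>) < of_int (i n)" and hi: "of_int (i n) < real n * (\<epsilon> + \<delta>)"
        and n0: "0 < n" by auto
      define t where "t = (of_int (i n) :: real)"
      define N where "N = real n"
      have N1: "N \<ge> 1" using n0 by (simp add: N_def)
      have t0: "0 < t"
      proof -
        have "\<epsilon> - \<delta> > 0" using d1 e by linarith
        hence "real n * (\<epsilon> - \<delta>) > 0" using n0 by simp
        thus ?thesis using lo by (simp add: t_def)
      qed
      have edb0: "\<epsilon> + a*(1-\<beta>)/2 = (1-(1-2*\<epsilon>)*\<beta>)/2" unfolding a_def by (simp add: field_simps)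
      have edb: "\<epsilon> + \<delta> \<le> (1-(1-2*\<epsilon>)*\<beta>)/2" using d1 edb0 by linarith
      have tup: "t \<le> N*(1-(1-2*\<epsilon>)*\<beta>)/2"
      proof -
        have "N*(\<epsilon>+\<delta>) \<le> N*((1-(1-2*\<epsilon>)*\<beta>)/2)" using edb N1 by (intro mult_left_mono) auto
        thus ?thesis using hi unfolding t_def N_def by simp
      qed
      have tN: "t \<le> N"
      proof -
        have "0 \<le> (1-2*\<epsilon>)*\<beta>" using a b unfolding a_def by simp
        hence "(1-(1-2*\<epsilon>)*\<beta>)/2 \<le> 1" by simp
        hence "N*((1-(1-2*\<epsilon>)*\<beta>)/2) \<le> N*1" using N1 by (intro mult_left_mono) auto
        thus ?thesis using tup by simp
      qed
      have dev: "\<bar>t - \<epsilon>*N\<bar> \<le> \<delta>*N"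
      proof -
        have "\<epsilon>*N - \<delta>*N < t" "t < \<epsilon>*N + \<delta>*N" using lo hi unfolding t_def N_def by (simp_all add: algebra_simps)
        thus ?thesis by (simp add: abs_le_iff)
      qed
      have RN: "0 \<le> R * real n" using assms(5) by simp
      have kn: "k n \<le> n"
      proof -
        have "R * real n \<le> 1 * real n" using R1 by (intro mult_right_mono) auto
        hence "\<lfloor>R*real n\<rfloor> \<le> int n" by (simp add: floor_le_iff)
        thus ?thesis by (simp add: k_def nat_le_iff)
      qed
      have kR: "real (k n) \<le> R * N"
      proof -
        have "real (k n) = of_int \<lfloor>R * real n\<rfloor>" using RN by (simp add: k_def)
        thus ?thesis using of_int_floor_le[of "R * real n"] by (simp add: N_def)
      qed
      have trm: "real (k n choose j) * (1 - (1 - 2*\<epsilon>) * (1 - 2*\<rho>) ^ j) powr (of_int (i n))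
          * (1 + (1 - 2*\<epsilon>) * (1 - 2*\<rho>) ^ j) powr (real n - of_int (i n))
        / (2 ^ n * \<epsilon> powr (of_int (i n)) * (1 - \<epsilon>) powr (real n - of_int (i n)))
        = real (k n choose j) * exp (E n j)" for j
      proof -
        have "\<bar>(1-2*\<rho>)^j\<bar> \<le> 1" using b by (simp add: power_abs \<beta>_def[symmetric] power_le_one)
        note h = expE[OF e this, where t="of_int (i n)" and n=n]
        show ?thesis unfolding E_def using arg_cong[OF h, of "(*) (real (k n choose j))"]
          by (simp add: mult.assoc)
      qed
      have r_eq: "r n = (\<Sum>j=0..k n. real (k n choose j) * exp (E n j))"
        unfolding r_def k_def[symmetric] sum_divide_distrib by (simp only: trm)
      have E0: "E n 0 = 0"
      proof -
        have "1-(1-2*\<epsilon>)*(1-2*\<rho>)^0 = 2*\<epsilon>" by simp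
        hence h1: "ln (1-(1-2*\<epsilon>)*(1-2*\<rho>)^0) = ln 2 + ln \<epsilon>" using e by (simp add: ln_mult_pos)
        have "1+(1-2*\<epsilon>)*(1-2*\<rho>)^0 = 2*(1-\<epsilon>)" by simp
        moreover have "ln (2*(1-\<epsilon>)) = ln 2 + ln (1-\<epsilon>)" using e by (intro ln_mult_pos) auto
        ultimately have h2: "ln (1+(1-2*\<epsilon>)*(1-2*\<rho>)^0) = ln 2 + ln (1-\<epsilon>)" by metis
        show ?thesis unfolding E_def h1 h2 by (simp add: algebra_simps)
      qed
      have rS: "r n = 1 + S n"
        unfolding r_eq S_def by (simp add: sum.atLeast_Suc_atMost E0)
      have S0: "0 \<le> S n" unfolding S_def by (intro sum_nonneg) auto
      define W where "W = exp (N*(hn - ln 2 + g/2))"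
      have tb: "real (k n choose j) * exp (E n j) \<le> N^J * exp (-c*N) + real (k n choose j) * W"
        if j: "j \<in> {1..k n}" for j
      proof -
        define x where "x = (1-2*\<rho>)^j"
        have ax: "\<bar>x\<bar> = \<beta>^j" by (simp add: x_def \<beta>_def power_abs)
        have bj: "\<beta>^j \<le> \<beta>" using power_decreasing[of 1 j \<beta>] b j by auto
        have x1: "\<bar>x\<bar> \<le> 1" using ax bj b by simp
        have Ex: "E n j = t*ln(1-(1-2*\<epsilon>)*x) + (N-t)*ln(1+(1-2*\<epsilon>)*x) - (N*ln 2 + t*ln \<epsilon> + (N-t)*ln(1-\<epsilon>))"
          by (simp add: E_def x_def t_def N_def)
        have E1: "E n j \<le> -c*N" unfolding Ex
          using e b ax bj t0 tup N1 dev d3 \<delta>pos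
          by (intro Ebound1[where U=U and V=V and c=c and \<delta>=\<delta> and \<beta>=\<beta>]) (auto simp: U_def V_def c_def)
        have E2: "E n j \<le> N*\<bar>x\<bar> + N*(hn - ln 2) + \<delta>*N*K" unfolding Ex hn_def
          using e x1 t0 tN dev \<delta>pos
          by (intro Ebound2[where K=K]) (auto simp: K_def)
        show ?thesis
        proof (cases "j \<le> J")
          case True
          have "k n choose j \<le> k n ^ j" using j by (intro binomial_le_pow) auto
          hence "real (k n choose j) \<le> real (k n) ^ j" by (metis of_nat_le_iff of_nat_power)
          also have "\<dots> \<le> N^j" using kn by (simp add: N_def power_mono)
          also have "\<dots> \<le> N^J" using N1 True by (intro power_increasing) auto
          finally have C: "real (k n choose j) \<le> N^J" .
          have "real (k n choose j) * exp (E n j) \<le> N^J * exp (-c*N)"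
            using C E1 by (intro mult_mono) auto
          moreover have "0 \<le> real (k n choose j) * W" by (simp add: W_def)
          ultimately show ?thesis by linarith
        next
          case False
          have "\<beta>^j \<le> \<beta>^J" using False b by (intro power_decreasing) auto
          hence "N*\<bar>x\<bar> \<le> N*(g/4)" using ax J N1 by (intro mult_left_mono) auto
          moreover have "\<delta>*N*K \<le> N*(g/4)" using d4 N1 by (simp add: mult.commute mult.left_commute mult_left_mono)
          ultimately have "E n j \<le> N*(hn - ln 2 + g/2)" using E2 by (simp add: algebra_simps)
          hence "exp (E n j) \<le> W" by (simp add: W_def)
          hence "real (k n choose j) * exp (E n j) \<le> real (k n choose j) * W" by (intro mult_left_mono) auto
          moreover have "0 \<le> N^J * exp (-c*N)" using N1 by simp
          ultimately show ?thesis by linarith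
        qed
      qed
      have "S n \<le> (\<Sum>j\<in>{1..k n}. N^J * exp (-c*N) + real (k n choose j) * W)"
        unfolding S_def by (rule sum_mono) (rule tb)
      also have "\<dots> = real (k n) * (N^J * exp (-c*N)) + (\<Sum>j\<in>{1..k n}. real (k n choose j)) * W"
        by (simp add: sum.distrib sum_distrib_right)
      also have "\<dots> \<le> N^Suc J * exp (-c*N) + 2^(k n) * W"
      proof (rule add_mono)
        have "real (k n) * (N^J * exp (-c*N)) \<le> N * (N^J * exp (-c*N))"
          using kn by (intro mult_right_mono) (auto simp: N_def)
        thus "real (k n) * (N^J * exp (-c*N)) \<le> N^Suc J * exp (-c*N)" by simp
        have "(\<Sum>j\<in>{1..k n}. real (k n choose j)) \<le> (\<Sum>j\<le>k n. real (k n choose j))"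
          by (intro sum_mono2) auto
        also have "\<dots> = 2^(k n)" by (simp only: of_nat_sum[symmetric] choose_row_sum) simp
        finally show "(\<Sum>j\<in>{1..k n}. real (k n choose j)) * W \<le> 2^(k n) * W"
          by (intro mult_right_mono) (auto simp: W_def)
      qed
      also have "\<dots> \<le> B n"
      proof -
        have "(2::real)^(k n) = exp (real (k n) * ln 2)" by (simp add: exp_of_nat_mult)
        also have "\<dots> \<le> exp (R * N * ln 2)" using kR l2 by (simp add: mult_right_mono)
        finally have "2^(k n) * W \<le> exp (R * N * ln 2) * W" by (intro mult_right_mono) (auto simp: W_def)
        also have "\<dots> = exp (-(g/2) * N)" unfolding W_def g_def exp_add[symmetric] by (simp add: algebra_simps)
        finally show ?thesis unfolding B_def N_def by simp
      qed
      finally show "r n = 1 + S n \<and> 0 \<le> S n \<and> S n \<le> B n" using rS S0 by simp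
    qed
    have B0: "B \<longlonglongrightarrow> 0"
      unfolding B_def using lim_aux[OF c, of "Suc J"] lim_aux[of "g/2" 0] g
      by (intro tendsto_add_zero) auto
    have "S \<longlonglongrightarrow> 0"
      by (rule tendsto_sandwich[OF _ _ tendsto_const B0]) (use key in \<open>auto elim: eventually_mono\<close>)
    hence "(\<lambda>n. 1 + S n) \<longlonglongrightarrow> 1" using tendsto_add[OF tendsto_const, of S 0 sequentially 1] by simp
    hence "r \<longlonglongrightarrow> 1"
      by (rule Lim_transform_eventually) (use key in \<open>auto elim: eventually_mono\<close>)
    thus "(\<lambda>n. (\<Sum>j=0..nat \<lfloor>R * real n\<rfloor>. real (nat \<lfloor>R * real n\<rfloor> choose j)
          * (1 - (1 - 2*\<epsilon>) * (1 - 2*\<rho>) ^ j) powr (of_int (i n))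
          * (1 + (1 - 2*\<epsilon>) * (1 - 2*\<rho>) ^ j) powr (real n - of_int (i n)))
        / (2 ^ n * \<epsilon> powr (of_int (i n)) * (1 - \<epsilon>) powr (real n - of_int (i n))))
      \<longlonglongrightarrow> 1" unfolding r_def .
  qed
qed

end
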